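(* Let $N\ge1$ be an integer, $d>0$, $0\le s_1\le\dots\le s_N$, and let $T\ge (N+1)d$. Let (P) be the problem $$\min_{x\in\mathbb{R}^{N+1}}\ \sum_{i=1}^{N+1}x_i^2$$ subject to - $\sum_{i=1}^k x_i\ge s_k+kd$ for $1\le k\le N$, - $x_i\ge 2d$ for $2\le i\le N$, - $x_{N+1}\ge d$, - $\sum_{i=1}^{N+1}x_i=T+Nd$. Assume (P) is feasible, and let $x^*$ be its optimal solution. Let $(P^e)$ be the same problem without the constraints $x_i\ge 2d$ ($2\le i\le N$) and $x_{N+1}\ge d$, and let $x^e$ be the optimal solution of $(P^e)$. If $x_i^e\ge 2d$ for all $2\le i\le N$ and $x_{N+1}^e\ge d$, then $x^*=x^e$. Otherwise, let $n_0$ be the smallest index $i\in\{2,\dots,N+1\}$ at which $x^e$ violates its constraint in (P), meaning $x_i^e<2d$ if $i\le N$, or $x_{N+1}^e<d$ if $i=N+1$. Then $n_0\le N$, and the following hold. - If $n_0>2$, then $x_i^*=x_i^e$ for $1\le i\le n_0-1$, $x_i^*=2d$ for $n_0\le i\le N$, and $x_{N+1}^*=T+Nd-\sum_{i=1}^N x_i^*$. - If $n_0=2$ and $x_1^e=s_1+d$, then $x^*$ is given by the same formulas with $n_0=2$. - If $n_0=2$ and $x_1^e\ne s_1+d$, then $x_1^*=\max\left\{\frac{T-(N-2)d}{2},\ \max_{1\le k\le N}\{s_k-(k-2)d\}\right\}$, $x_i^*=2d$ for $2\le i\le N$, and $x_{N+1}^*=T-(N-2)d-x_1^*$.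
   Context: This optimization problem arises from minimizing the area under the age-of-information curve of a single energy harvesting transmitter with energy arrival times $s_k$, fixed service time $d$, and session length $T$. Both (P) and $(P^e)$ have strictly convex objectives, so their optimal solutions are unique whenever they exist. *)

theory Defs
  imports Complex_Main
begin

(* Vectors x in R^(N+1) are represented as functions nat => real; only the
   components x 1, ..., x (N+1) are meaningful. *)

definition aoi_obj :: "nat \<Rightarrow> (nat \<Rightarrow> real) \<Rightarrow> real" where
  "aoi_obj N x = (\<Sum>i=1..N+1. (x i)^2)"

definition feas_Pe :: "nat \<Rightarrow> real \<Rightarrow> (nat \<Rightarrow> real) \<Rightarrow> real \<Rightarrow> (nat \<Rightarrow> real) \<Rightarrow> bool" where
  "feas_Pe N d s T x \<longleftrightarrow>
     (\<forall>k\<in>{1..N}. (\<Sum>i=1..k. x i) \<ge> s k + real k * d) \<and>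
     (\<Sum>i=1..N+1. x i) = T + real N * d"

definition feas_P :: "nat \<Rightarrow> real \<Rightarrow> (nat \<Rightarrow> real) \<Rightarrow> real \<Rightarrow> (nat \<Rightarrow> real) \<Rightarrow> bool" where
  "feas_P N d s T x \<longleftrightarrow>
     feas_Pe N d s T x \<and> (\<forall>i\<in>{2..N}. x i \<ge> 2 * d) \<and> x (N+1) \<ge> d"

definition is_optimal :: "nat \<Rightarrow> ((nat \<Rightarrow> real) \<Rightarrow> bool) \<Rightarrow> (nat \<Rightarrow> real) \<Rightarrow> bool" where
  "is_optimal N F x \<longleftrightarrow> F x \<and> (\<forall>y. F y \<longrightarrow> aoi_obj N x \<le> aoi_obj N y)"

definition violates :: "nat \<Rightarrow> real \<Rightarrow> (nat \<Rightarrow> real) \<Rightarrow> nat \<Rightarrow> bool" where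
  "violates N d x i \<longleftrightarrow> (2 \<le> i \<and> i \<le> N \<and> x i < 2 * d) \<or> (i = N + 1 \<and> x (N+1) < d)"

end

theory Submission
  imports Defs
begin

lemma sum_split:
  fixes m n p :: nat
  assumes "m \<le> n + 1" "n \<le> p"
  shows "(\<Sum>i=m..p. f i) = (\<Sum>i=m..n. f i) + (\<Sum>i=n+1..p. (f i :: real))"
proof -
  have "{m..p} = {m..n} \<union> {n+1..p}" using assms by (auto simp: set_eq_iff)
  moreover have "{m..n} \<inter> {n+1..p} = {}" by auto
  ultimately show ?thesis by (simp add: sum.union_disjoint)
qed

lemma sum_last: fixes n :: nat shows "(\<Sum>i=1..n+1. f i) = (\<Sum>i=1..n. f i) + (f (n+1) :: real)"
  using sum_split[of 1 n "n+1" f] by simp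

lemma abel:
  fixes m :: nat
  shows  "(\<Sum>i=1..m+1. a i * w i) = (\<Sum>k=1..m. (a k - a (k+1)) * (\<Sum>i=1..k. w i)) + a (m+1) * (\<Sum>i=1..m+1. (w i::real))"
proof (induction m)
  case 0
  then show ?case by simp
next
  case (Suc m)
  have "(\<Sum>i=1..Suc m+1. a i * w i) = (\<Sum>i=1..m+1. a i * w i) + a (m+2) * w (m+2)" by simp
  also have "\<dots> = (\<Sum>k=1..m. (a k - a (k+1)) * (\<Sum>i=1..k. w i)) + a (m+1) * (\<Sum>i=1..m+1. w i) + a (m+2) * w (m+2)"
    using Suc by simp
  also have "\<dots> = (\<Sum>k=1..Suc m. (a k - a (k+1)) * (\<Sum>i=1..k. w i)) + a (Suc m+1) * (\<Sum>i=1..Suc m+1. w i)"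
    by (simp add: algebra_simps)
  finally show ?case .
qed

lemma feas_P_mid:
  assumes "feas_P N d s T x" "feas_P N d s T y"
  shows "feas_P N d s T (\<lambda>i. (x i + y i)/2)"
proof -
  have sm: "\<And>k. (\<Sum>i=1..k. (x i + y i)/2) = ((\<Sum>i=1..k. x i) + (\<Sum>i=1..k. y i))/2"
    by (simp add: sum.distrib sum_divide_distrib[symmetric])
  show ?thesis using assms unfolding feas_P_def feas_Pe_def sm
  proof (intro conjI ballI)
    fix k assume k: "k \<in> {1..N}"
    have "s k + real k * d \<le> (\<Sum>i=1..k. x i)" "s k + real k * d \<le> (\<Sum>i=1..k. y i)"
      using assms k unfolding feas_P_def feas_Pe_def by auto
    then show "s k + real k * d \<le> ((\<Sum>i=1..k. x i) + (\<Sum>i=1..k. y i))/2" by argo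
  next
    show "((\<Sum>i=1..N+1. x i) + (\<Sum>i=1..N+1. y i))/2 = T + real N * d"
      using assms unfolding feas_P_def feas_Pe_def by argo
  next
    fix i assume i: "i \<in> {2..N}"
    have "2*d \<le> x i" "2*d \<le> y i" using assms i unfolding feas_P_def by auto
    then show "2*d \<le> (x i + y i)/2" by argo
  next
    show "d \<le> (x (N+1) + y (N+1))/2" using assms unfolding feas_P_def by argo
  qed
qed

lemma obj_mid: "aoi_obj N (\<lambda>i. (x i + y i)/2) = (aoi_obj N x + aoi_obj N y)/2 - (\<Sum>i=1..N+1. (x i - y i)^2)/4"
proof -
  have "\<And>i. ((x i + y i)/2)^2 = (x i^2 + y i^2)/2 - (x i - y i)^2/4"
    by (simp add: power2_eq_square field_simps)
  then show ?thesis unfolding aoi_obj_def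
    by (simp add: sum_subtractf sum_divide_distrib[symmetric] sum.distrib)
qed

lemma unique:
  assumes "is_optimal N (feas_P N d s T) x" "is_optimal N (feas_P N d s T) y"
  shows "\<forall>i\<in>{1..N+1}. x i = y i"
proof -
  have F: "feas_P N d s T x" "feas_P N d s T y" using assms unfolding is_optimal_def by auto
  have "feas_P N d s T (\<lambda>i. (x i + y i)/2)" using feas_P_mid F by blast
  then have "aoi_obj N x \<le> aoi_obj N (\<lambda>i. (x i + y i)/2)" "aoi_obj N y \<le> aoi_obj N (\<lambda>i. (x i + y i)/2)"
    using assms unfolding is_optimal_def by auto
  then have le: "(\<Sum>i=1..N+1. (x i - y i)^2) \<le> 0" unfolding obj_mid by argo
  have "(\<Sum>i=1..N+1. (x i - y i)^2) = 0" using le sum_nonneg[of "{1..N+1}" "\<lambda>i. (x i - y i)^2"] by simp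
  then have "\<forall>i\<in>{1..N+1}. (x i - y i)^2 = 0" using sum_nonneg_eq_0_iff[of "{1..N+1}" "\<lambda>i. (x i - y i)^2"] by simp
  then show ?thesis by simp
qed

lemma VI_opt:
  assumes "feas_P N d s T y" "\<forall>z. feas_P N d s T z \<longrightarrow> 0 \<le> (\<Sum>i=1..N+1. y i * (z i - y i))"
  shows "is_optimal N (feas_P N d s T) y"
  unfolding is_optimal_def
proof (intro conjI allI impI)
  show "feas_P N d s T y" by fact
  fix z assume z: "feas_P N d s T z"
  have "\<And>i. (z i)^2 = (y i)^2 + 2 * (y i * (z i - y i)) + (z i - y i)^2"
    by (simp add: power2_eq_square algebra_simps)
  then have "aoi_obj N z = aoi_obj N y + 2 * (\<Sum>i=1..N+1. y i * (z i - y i)) + (\<Sum>i=1..N+1. (z i - y i)^2)"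
    unfolding aoi_obj_def by (simp add: sum.distrib sum_distrib_left)
  moreover have "0 \<le> (\<Sum>i=1..N+1. (z i - y i)^2)" by (simp add: sum_nonneg)
  ultimately show "aoi_obj N y \<le> aoi_obj N z" using assms(2) z by fastforce
qed

lemma perturb:
  fixes x :: "nat \<Rightarrow> real"
  assumes F: "feas_Pe N d s T x" and k: "k \<in> {1..N}"
    and e: "(\<Sum>i=1..k. x i) + e \<ge> s k + real k * d"
  defines "x' \<equiv> \<lambda>i. x i + ((if i = k then e else 0) - (if i = k+1 then e else 0))"
  shows "feas_Pe N d s T x'" "aoi_obj N x' = aoi_obj N x + 2*e*(x k - x (k+1)) + 2*e^2"
proof -
  have ps: "\<And>j. (\<Sum>i=1..j. x' i) = (\<Sum>i=1..j. x i) + ((if k \<le> j then e else 0) - (if k+1 \<le> j then e else 0))"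
    using k unfolding x'_def by (simp add: sum.distrib sum_subtractf)
  show "feas_Pe N d s T x'" unfolding feas_Pe_def
  proof (intro conjI ballI)
    fix j assume j: "j \<in> {1..N}"
    show "s j + real j * d \<le> (\<Sum>i=1..j. x' i)"
    proof (cases "j = k")
      case True then show ?thesis using e ps by simp
    next
      case False
      then have "(\<Sum>i=1..j. x' i) = (\<Sum>i=1..j. x i)" using ps by auto
      then show ?thesis using F j unfolding feas_Pe_def by auto
    qed
  next
    have "(\<Sum>i=1..N+1. x' i) = (\<Sum>i=1..N+1. x i)" using ps[of "N+1"] k by simp
    then show "(\<Sum>i=1..N+1. x' i) = T + real N * d" using F unfolding feas_Pe_def by auto
  qed
  have pw: "\<And>i. (x' i)^2 = (x i)^2 + ((if i = k then 2 * x k * e + e^2 else 0) + (if i = k+1 then e^2 - 2 * x (k+1) * e else 0))"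
    unfolding x'_def by (auto simp: power2_eq_square algebra_simps)
  have "aoi_obj N x' = aoi_obj N x + ((2 * x k * e + e^2) + (e^2 - 2 * x (k+1) * e))"
    unfolding aoi_obj_def pw using k by (simp add: sum.distrib)
  then show "aoi_obj N x' = aoi_obj N x + 2*e*(x k - x (k+1)) + 2*e^2"
    by (simp add: algebra_simps power2_eq_square)
qed

lemma K1:
  assumes opt: "is_optimal N (feas_Pe N d s T) x" and k: "k \<in> {1..N}"
  shows "x (k+1) \<le> x k"
proof (rule ccontr)
  assume "\<not> x (k+1) \<le> x k"
  define e where "e = (x (k+1) - x k)/2"
  have e0: "e > 0" using \<open>\<not> x (k+1) \<le> x k\<close> unfolding e_def by simp
  have F: "feas_Pe N d s T x" using opt unfolding is_optimal_def by auto
  have "(\<Sum>i=1..k. x i) \<ge> s k + real k * d" using F k unfolding feas_Pe_def by auto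
  then have c: "(\<Sum>i=1..k. x i) + e \<ge> s k + real k * d" using e0 by simp
  note P = perturb[OF F k c]
  have "aoi_obj N x \<le> aoi_obj N (\<lambda>i. x i + ((if i = k then e else 0) - (if i = k+1 then e else 0)))"
    using opt P(1) unfolding is_optimal_def by blast
  also have "\<dots> = aoi_obj N x - 2*e^2"
  proof -
    have h: "x k - x (k+1) = -2*e" unfolding e_def by simp
    show ?thesis unfolding P(2) h by (simp add: power2_eq_square)
  qed
  finally show False using e0 by simp
qed

lemma K2:
  assumes opt: "is_optimal N (feas_Pe N d s T) x" and k: "k \<in> {1..N}" and lt: "x (k+1) < x k"
  shows "(\<Sum>i=1..k. x i) = s k + real k * d"
proof (rule ccontr)
  assume ne: "(\<Sum>i=1..k. x i) \<noteq> s k + real k * d"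
  have F: "feas_Pe N d s T x" using opt unfolding is_optimal_def by auto
  have "(\<Sum>i=1..k. x i) \<ge> s k + real k * d" using F k unfolding feas_Pe_def by auto
  then have g: "(\<Sum>i=1..k. x i) - (s k + real k * d) > 0" using ne by simp
  define D where "D = x k - x (k+1)"
  have D0: "D > 0" using lt unfolding D_def by simp
  define e where "e = - min (D/2) ((\<Sum>i=1..k. x i) - (s k + real k * d))"
  have e0: "e < 0" using g D0 unfolding e_def by simp
  have eD: "e \<ge> - D/2" unfolding e_def by (simp add: min_def)
  have c: "(\<Sum>i=1..k. x i) + e \<ge> s k + real k * d" unfolding e_def by simp
  note P = perturb[OF F k c]
  have "aoi_obj N x \<le> aoi_obj N (\<lambda>i. x i + ((if i = k then e else 0) - (if i = k+1 then e else 0)))"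
    using opt P(1) unfolding is_optimal_def by blast
  also have "\<dots> = aoi_obj N x + 2*e*(D + e)" unfolding P(2) D_def by (simp add: power2_eq_square algebra_simps)
  finally have "0 \<le> e * (D + e)" by simp
  moreover have "e * (D + e) < 0" using e0 eD D0 by (intro mult_neg_pos) auto
  ultimately show False by simp
qed

lemma mono_trans:
  assumes opt: "is_optimal N (feas_Pe N d s T) x" and ij: "i \<le> j" and i1: "1 \<le> i" and jN: "j \<le> N+1"
  shows "x j \<le> x i"
  using ij jN
proof (induction j rule: dec_induct)
  case base then show ?case by simp
next
  case (step n)
  have "x (n+1) \<le> x n" using K1[OF opt, of n] step i1 by auto
  then show ?case using step by simp
qed

lemma F1:
  assumes F: "feas_P N d s T x" and k: "k \<in> {1..N}"
  shows "s k + real k * d + 2*d*real (N-k) + d \<le> T + real N * d"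
proof -
  have a: "(\<Sum>i=1..N+1. x i) = (\<Sum>i=1..k. x i) + (\<Sum>i=k+1..N. x i) + x (N+1)"
    using sum_split[of 1 k N x] k by (simp add: sum_last)
  have "(\<Sum>i=k+1..N. x i) \<ge> (\<Sum>i=k+1..N. 2*d)"
    using F k unfolding feas_P_def by (intro sum_mono) auto
  then have b: "(\<Sum>i=k+1..N. x i) \<ge> 2*d*real (N-k)" by (simp add: algebra_simps)
  have "(\<Sum>i=1..k. x i) \<ge> s k + real k * d" "x (N+1) \<ge> d" "(\<Sum>i=1..N+1. x i) = T + real N * d"
    using F k unfolding feas_P_def feas_Pe_def by auto
  then show ?thesis using a b by linarith
qed

lemma caseA:
  fixes N m :: nat and d T :: real and s xs xe :: "nat \<Rightarrow> real"
  assumes d: "d > 0"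
    and xs_opt: "is_optimal N (feas_P N d s T) xs"
    and xe_opt: "is_optimal N (feas_Pe N d s T) xe"
    and m1: "1 \<le> m" and mN: "m < N"
    and act: "(\<Sum>i=1..m. xe i) = s m + real m * d"
    and bef: "\<And>i. 2 \<le> i \<Longrightarrow> i \<le> m \<Longrightarrow> 2*d \<le> xe i"
    and aft: "\<And>i. m < i \<Longrightarrow> i \<le> N+1 \<Longrightarrow> xe i < 2*d"
  shows "(\<forall>i\<in>{1..m}. xs i = xe i) \<and> (\<forall>i\<in>{m+1..N}. xs i = 2*d)"
proof -
  have xsF: "feas_P N d s T xs" using xs_opt unfolding is_optimal_def by auto
  have xeF: "feas_Pe N d s T xe" using xe_opt unfolding is_optimal_def by auto
  have xe_pref: "\<And>k. k \<in> {1..N} \<Longrightarrow> s k + real k * d \<le> (\<Sum>i=1..k. xe i)"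
    using xeF unfolding feas_Pe_def by auto
  have xe_tot: "(\<Sum>i=1..N+1. xe i) = T + real N * d" using xeF unfolding feas_Pe_def by auto
  define c where "c = T + real N * d - (\<Sum>i=1..m. xe i) - 2*d*real(N-m)"
  define y where "y = (\<lambda>i. if i \<le> m then xe i else if i \<le> N then 2*d else c)"
  have y_lo: "\<And>k. k \<le> m \<Longrightarrow> (\<Sum>i=1..k. y i) = (\<Sum>i=1..k. xe i)"
    unfolding y_def by (intro sum.cong) auto
  have sumy: "(\<Sum>i=1..k. y i) = (\<Sum>i=1..m. xe i) + 2*d*real(k-m)" if k: "m \<le> k" "k \<le> N" for k
  proof -
    have "(\<Sum>i=1..k. y i) = (\<Sum>i=1..m. y i) + (\<Sum>i=m+1..k. y i)"
      using sum_split[of 1 m k y] k m1 by simp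
    moreover have "(\<Sum>i=m+1..k. y i) = (\<Sum>i=m+1..k. 2*d)"
      unfolding y_def using k by (intro sum.cong) auto
    ultimately show ?thesis using y_lo[of m] by (simp add: algebra_simps)
  qed
  have sumxe: "(\<Sum>i=1..k. xe i) \<le> (\<Sum>i=1..m. xe i) + 2*d*real(k-m)" if k: "m \<le> k" "k \<le> N" for k
  proof -
    have "(\<Sum>i=1..k. xe i) = (\<Sum>i=1..m. xe i) + (\<Sum>i=m+1..k. xe i)"
      using sum_split[of 1 m k xe] k m1 by simp
    moreover have "(\<Sum>i=m+1..k. xe i) \<le> (\<Sum>i=m+1..k. 2*d)"
    proof (intro sum_mono)
      fix i assume "i \<in> {m+1..k}"
      then show "xe i \<le> 2*d" using aft[of i] k by force
    qed
    ultimately show ?thesis by (simp add: algebra_simps)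
  qed
  have c_le: "c \<le> xe (N+1)"
    using xe_tot sumxe[of N] mN unfolding c_def sum_last by simp
  have c_lt: "c < 2*d" using c_le aft[of "N+1"] mN by simp
  have c_ge: "d \<le> c"
    using F1[OF xsF, of m] m1 mN act unfolding c_def by simp
  have ytot: "(\<Sum>i=1..N+1. y i) = T + real N * d"
    unfolding sum_last using sumy[of N] mN by (simp add: y_def c_def)
  have yF: "feas_P N d s T y"
    unfolding feas_P_def feas_Pe_def
  proof (intro conjI ballI)
    fix k assume k: "k \<in> {1..N}"
    show "s k + real k * d \<le> (\<Sum>i=1..k. y i)"
    proof (cases "k \<le> m")
      case True then show ?thesis using y_lo xe_pref k by simp
    next
      case False then show ?thesis using sumy[of k] sumxe[of k] xe_pref[OF k] k by simp
    qed
  next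
    show "(\<Sum>i=1..N+1. y i) = T + real N * d" by (fact ytot)
  next
    fix i assume "i \<in> {2..N}" then show "2*d \<le> y i" unfolding y_def using bef by auto
  next
    show "d \<le> y (N+1)" unfolding y_def using c_ge mN by simp
  qed
  have VI: "\<forall>z. feas_P N d s T z \<longrightarrow> 0 \<le> (\<Sum>i=1..N+1. y i * (z i - y i))"
  proof (intro allI impI)
    fix z assume zF: "feas_P N d s T z"
    define w where "w = (\<lambda>i. z i - y i)"
    have z_pref: "\<And>k. k \<in> {1..N} \<Longrightarrow> s k + real k * d \<le> (\<Sum>i=1..k. z i)"
      using zF unfolding feas_P_def feas_Pe_def by auto
    have sw: "(\<Sum>i=1..N+1. w i) = 0" using zF ytot unfolding w_def feas_P_def feas_Pe_def
      by (simp add: sum_subtractf)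
    have W: "\<And>k. k \<le> m \<Longrightarrow> (\<Sum>i=1..k. w i) = (\<Sum>i=1..k. z i) - (\<Sum>i=1..k. xe i)"
      unfolding w_def using y_lo by (simp add: sum_subtractf)
    have e1: "(\<Sum>i=1..N+1. y i * w i) = (\<Sum>i=1..N+1. (y i - c) * w i)"
      using sw by (simp add: algebra_simps sum_subtractf sum_distrib_left[symmetric])
    have e2: "(\<Sum>i=1..N+1. (y i - c) * w i) = (\<Sum>i=1..m. (xe i - c) * w i) + (\<Sum>i=m+1..N. (2*d - c) * w i)"
    proof -
      have "(\<Sum>i=1..N+1. (y i - c) * w i) = (\<Sum>i=1..m. (y i - c) * w i) + (\<Sum>i=m+1..N. (y i - c) * w i) + (y (N+1) - c) * w (N+1)"
        unfolding sum_last using sum_split[of 1 m N "\<lambda>i. (y i - c) * w i"] m1 mN by simp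
      moreover have "(\<Sum>i=1..m. (y i - c) * w i) = (\<Sum>i=1..m. (xe i - c) * w i)"
        unfolding y_def by (intro sum.cong) auto
      moreover have "(\<Sum>i=m+1..N. (y i - c) * w i) = (\<Sum>i=m+1..N. (2*d - c) * w i)"
        unfolding y_def by (intro sum.cong) auto
      moreover have "y (N+1) = c" unfolding y_def using mN by simp
      ultimately show ?thesis by simp
    qed
    have p2: "0 \<le> (\<Sum>i=m+1..N. (2*d - c) * w i)"
    proof (intro sum_nonneg mult_nonneg_nonneg)
      fix i assume i: "i \<in> {m+1..N}"
      show "0 \<le> 2*d - c" using c_lt by simp
      have "2*d \<le> z i" using zF i m1 unfolding feas_P_def by auto
      then show "0 \<le> w i" unfolding w_def y_def using i by simp
    qed
    have p1: "0 \<le> (\<Sum>i=1..m. (xe i - c) * w i)"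
    proof -
      obtain m' where m': "m = m' + 1" using m1 by (metis add.commute le_Suc_ex plus_1_eq_Suc)
      have ab: "(\<Sum>i=1..m. (xe i - c) * w i) = (\<Sum>k=1..m'. ((xe k - c) - (xe (k+1) - c)) * (\<Sum>i=1..k. w i)) + (xe m - c) * (\<Sum>i=1..m. w i)"
        unfolding m' by (rule abel)
      have t1: "0 \<le> (\<Sum>k=1..m'. ((xe k - c) - (xe (k+1) - c)) * (\<Sum>i=1..k. w i))"
      proof (intro sum_nonneg)
        fix k assume k: "k \<in> {1..m'}"
        have kN: "k \<in> {1..N}" using k m' mN by auto
        have mono: "xe (k+1) \<le> xe k" using K1[OF xe_opt kN] .
        show "0 \<le> ((xe k - c) - (xe (k+1) - c)) * (\<Sum>i=1..k. w i)"
        proof (cases "xe (k+1) < xe k")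
          case True
          have "(\<Sum>i=1..k. xe i) = s k + real k * d" using K2[OF xe_opt kN True] .
          moreover have "(\<Sum>i=1..k. w i) = (\<Sum>i=1..k. z i) - (\<Sum>i=1..k. xe i)" using W k m' by simp
          ultimately have "0 \<le> (\<Sum>i=1..k. w i)" using z_pref[OF kN] by simp
          then show ?thesis using mono by simp
        next
          case False
          then show ?thesis using mono by simp
        qed
      qed
      have t2: "0 \<le> (xe m - c) * (\<Sum>i=1..m. w i)"
      proof (intro mult_nonneg_nonneg)
        have "xe (N+1) \<le> xe m" using mono_trans[OF xe_opt, of m "N+1"] m1 mN by simp
        then show "0 \<le> xe m - c" using c_le by simp
        have "m \<in> {1..N}" using m1 mN by simp
        then show "0 \<le> (\<Sum>i=1..m. w i)" using W[of m] z_pref act by simp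
      qed
      show ?thesis using ab t1 t2 by simp
    qed
    show "0 \<le> (\<Sum>i=1..N+1. y i * (z i - y i))"
      using e1 e2 p1 p2 unfolding w_def by simp
  qed
  have "is_optimal N (feas_P N d s T) y" using VI_opt[OF yF VI] .
  then have eq: "\<forall>i\<in>{1..N+1}. xs i = y i" using unique[OF xs_opt] by blast
  then show ?thesis unfolding y_def using mN by auto
qed

lemma caseB:
  fixes N :: nat and d T :: real and s xs xe :: "nat \<Rightarrow> real"
  assumes N: "N \<ge> 1" and d: "d > 0"
    and T: "T \<ge> real (N+1) * d"
    and xs_opt: "is_optimal N (feas_P N d s T) xs"
    and xeF: "feas_Pe N d s T xe"
    and x1: "xe 1 < 2*d"
    and le1: "\<And>i. i \<in> {1..N+1} \<Longrightarrow> xe i \<le> xe 1"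
  shows "xs 1 = max ((T - (real N - 2) * d) / 2) (Max ((\<lambda>k. s k - (real k - 2) * d) ` {1..N})) \<and>
         (\<forall>i\<in>{2..N}. xs i = 2 * d) \<and>
         xs (N+1) = T - (real N - 2) * d - xs 1"
proof -
  have xsF: "feas_P N d s T xs" using xs_opt unfolding is_optimal_def by auto
  have xe_pref: "\<And>k. k \<in> {1..N} \<Longrightarrow> s k + real k * d \<le> (\<Sum>i=1..k. xe i)"
    using xeF unfolding feas_Pe_def by auto
  have xe_tot: "(\<Sum>i=1..N+1. xe i) = T + real N * d" using xeF unfolding feas_Pe_def by auto
  define L where "L = (T - (real N - 2) * d) / 2"
  define M where "M = Max ((\<lambda>k. s k - (real k - 2) * d) ` {1..N})"
  define y1 where "y1 = max L M"
  define c where "c = T - (real N - 2) * d - y1"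
  define y where "y = (\<lambda>i. if i = 1 then y1 else if i \<le> N then 2*d else c)"
  have fin: "finite ((\<lambda>k. s k - (real k - 2) * d) ` {1..N})" by simp
  have ne: "(\<lambda>k. s k - (real k - 2) * d) ` {1..N} \<noteq> {}" using N by auto
  have Mge: "\<And>k. k \<in> {1..N} \<Longrightarrow> s k - (real k - 2) * d \<le> M"
    unfolding M_def using fin by (intro Max_ge) auto
  have Tlt: "T < real (N+2) * d"
  proof -
    have "(\<Sum>i=1..N+1. xe i) \<le> (\<Sum>i=1..N+1. xe 1)" using le1 by (intro sum_mono) auto
    also have "\<dots> = real (N+1) * xe 1" by simp
    also have "\<dots> < real (N+1) * (2*d)" using x1 by (intro mult_strict_left_mono) auto
    finally show ?thesis using xe_tot by (simp add: algebra_simps)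
  qed
  have Mle1: "M \<le> xe 1"
    unfolding M_def
  proof (rule Max.boundedI[OF fin ne], clarify)
    fix k assume k: "k \<in> {1..N}"
    have "(\<Sum>i=1..k. xe i) \<le> (\<Sum>i=1..k. xe 1)" using le1 k by (intro sum_mono) auto
    then have a: "s k + real k * d \<le> real k * xe 1" using xe_pref[OF k] by simp
    have "0 \<le> (real k - 1) * (2*d - xe 1)" using k x1 by (intro mult_nonneg_nonneg) auto
    then have "real k * xe 1 \<le> xe 1 + 2*d*(real k - 1)" by (simp add: algebra_simps)
    then show "s k - (real k - 2) * d \<le> xe 1" using a by (simp add: algebra_simps)
  qed
  have Mle2: "M \<le> T - (real N - 1) * d"
    unfolding M_def
  proof (rule Max.boundedI[OF fin ne], clarify)
    fix k assume k: "k \<in> {1..N}"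
    have "real (N-k) = real N - real k" using k by simp
    then show "s k - (real k - 2) * d \<le> T - (real N - 1) * d" using F1[OF xsF k] by (simp add: algebra_simps)
  qed
  have Lle: "L \<le> T - (real N - 1) * d" unfolding L_def using T d by (simp add: field_simps)
  have y1le: "y1 \<le> T - (real N - 1) * d" unfolding y1_def using Mle2 Lle by simp
  have c_ge: "d \<le> c" unfolding c_def using y1le by (simp add: algebra_simps)
  have sumy: "(\<Sum>i=1..k. y i) = y1 + 2*d*(real k - 1)" if k: "k \<in> {1..N}" for k
  proof -
    have "(\<Sum>i=1..k. y i) = (\<Sum>i=1..1. y i) + (\<Sum>i=2..k. y i)"
      using sum_split[of 1 1 k y] k by (simp add: numeral_2_eq_2)
    moreover have "(\<Sum>i=2..k. y i) = (\<Sum>i=2..k. 2*d)"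
      unfolding y_def using k by (intro sum.cong) auto
    moreover have "real (k - 1) = real k - 1" using k by simp
    ultimately show ?thesis by (simp add: y_def algebra_simps)
  qed
  have ytot: "(\<Sum>i=1..N+1. y i) = T + real N * d"
  proof -
    have "(\<Sum>i=1..N+1. y i) = y1 + 2*d*(real N - 1) + c"
      unfolding sum_last using sumy[of N] N by (simp add: y_def)
    then show ?thesis unfolding c_def by (simp add: algebra_simps)
  qed
  have yF: "feas_P N d s T y"
    unfolding feas_P_def feas_Pe_def
  proof (intro conjI ballI)
    fix k assume k: "k \<in> {1..N}"
    have "s k - (real k - 2) * d \<le> y1" using Mge[OF k] unfolding y1_def by simp
    then show "s k + real k * d \<le> (\<Sum>i=1..k. y i)" using sumy[OF k] by (simp add: algebra_simps)
  next
    show "(\<Sum>i=1..N+1. y i) = T + real N * d" by (fact ytot)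
  next
    fix i assume "i \<in> {2..N}" then show "2*d \<le> y i" unfolding y_def by auto
  next
    show "d \<le> y (N+1)" unfolding y_def using c_ge N by simp
  qed
  have VI: "\<forall>z. feas_P N d s T z \<longrightarrow> 0 \<le> (\<Sum>i=1..N+1. y i * (z i - y i))"
  proof (intro allI impI)
    fix z assume zF: "feas_P N d s T z"
    define w where "w = (\<lambda>i. z i - y i)"
    have z_pref: "\<And>k. k \<in> {1..N} \<Longrightarrow> s k + real k * d \<le> (\<Sum>i=1..k. z i)"
      using zF unfolding feas_P_def feas_Pe_def by auto
    have wpos: "\<And>i. i \<in> {2..N} \<Longrightarrow> 0 \<le> w i"
      using zF unfolding feas_P_def w_def y_def by auto
    have sw: "(\<Sum>i=1..N+1. w i) = 0" using zF ytot unfolding w_def feas_P_def feas_Pe_def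
      by (simp add: sum_subtractf)
    have e1: "(\<Sum>i=1..N+1. y i * w i) = (\<Sum>i=1..N+1. (y i - c) * w i)"
      using sw by (simp add: algebra_simps sum_subtractf sum_distrib_left[symmetric])
    have e2: "(\<Sum>i=1..N+1. (y i - c) * w i) = (y1 - c) * w 1 + (2*d - c) * (\<Sum>i=2..N. w i)"
    proof -
      have "(\<Sum>i=1..N+1. (y i - c) * w i) = (\<Sum>i=1..1. (y i - c) * w i) + (\<Sum>i=2..N. (y i - c) * w i) + (y (N+1) - c) * w (N+1)"
        unfolding sum_last using sum_split[of 1 1 N "\<lambda>i. (y i - c) * w i"] N by (simp add: numeral_2_eq_2)
      moreover have "(\<Sum>i=2..N. (y i - c) * w i) = (\<Sum>i=2..N. (2*d - c) * w i)"
        unfolding y_def by (intro sum.cong) auto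
      moreover have "y (N+1) = c" unfolding y_def using N by simp
      ultimately show ?thesis by (simp add: y_def sum_distrib_left)
    qed
    have A0: "0 \<le> (\<Sum>i=2..N. w i)" using wpos by (intro sum_nonneg) auto
    have main: "0 \<le> (y1 - c) * w 1 + (2*d - c) * (\<Sum>i=2..N. w i)"
    proof (cases "M \<le> L")
      case True
      then have "y1 = L" "c = L" unfolding y1_def c_def L_def by (auto simp: field_simps)
      moreover have "L < 2*d" unfolding L_def using Tlt by (simp add: field_simps)
      ultimately show ?thesis using A0 by simp
    next
      case False
      then have y1M: "y1 = M" unfolding y1_def by simp
      have cM: "c < M" using False unfolding c_def y1M L_def by (simp add: field_simps)
      have "M \<in> (\<lambda>k. s k - (real k - 2) * d) ` {1..N}" unfolding M_def using fin ne by (rule Max_in)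
      then obtain k where k: "k \<in> {1..N}" and Mk: "M = s k - (real k - 2) * d" by auto
      have split1: "(\<Sum>i=1..k. w i) = w 1 + (\<Sum>i=2..k. w i)"
        using sum_split[of 1 1 k w] k by (simp add: numeral_2_eq_2)
      have split2: "(\<Sum>i=2..N. w i) = (\<Sum>i=2..k. w i) + (\<Sum>i=k+1..N. w i)"
        using sum_split[of 2 k N w] k by simp
      have Wk: "0 \<le> (\<Sum>i=1..k. w i)"
      proof -
        have "(\<Sum>i=1..k. w i) = (\<Sum>i=1..k. z i) - (\<Sum>i=1..k. y i)" unfolding w_def by (simp add: sum_subtractf)
        then show ?thesis using z_pref[OF k] sumy[OF k] Mk y1M by (simp add: algebra_simps)
      qed
      have A: "0 \<le> (\<Sum>i=2..k. w i)" using wpos k by (intro sum_nonneg) auto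
      have B: "0 \<le> (\<Sum>i=k+1..N. w i)" using wpos k by (intro sum_nonneg) auto
      have M2: "M \<le> 2*d" using Mle1 x1 by simp
      have "(y1 - c) * w 1 + (2*d - c) * (\<Sum>i=2..N. w i)
            = (M - c) * (\<Sum>i=1..k. w i) + (2*d - M) * (\<Sum>i=2..k. w i) + (2*d - c) * (\<Sum>i=k+1..N. w i)"
        unfolding split1 split2 y1M by (simp add: algebra_simps)
      moreover have "0 \<le> (M - c) * (\<Sum>i=1..k. w i)" using cM Wk by simp
      moreover have "0 \<le> (2*d - M) * (\<Sum>i=2..k. w i)" using M2 A by simp
      moreover have "0 \<le> (2*d - c) * (\<Sum>i=k+1..N. w i)" using cM M2 B by simp
      ultimately show ?thesis by linarith
    qed
    show "0 \<le> (\<Sum>i=1..N+1. y i * (z i - y i))"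
      using e1 e2 main unfolding w_def by simp
  qed
  have "is_optimal N (feas_P N d s T) y" using VI_opt[OF yF VI] .
  then have eq: "\<forall>i\<in>{1..N+1}. xs i = y i" using unique[OF xs_opt] by blast
  then show ?thesis unfolding y_def y1_def L_def M_def c_def using N by auto
qed

theorem theorem2:
  fixes N :: nat and d T :: real and s xs xe :: "nat \<Rightarrow> real"
  assumes N: "N \<ge> 1"
    and d: "d > 0"
    and s0: "0 \<le> s 1"
    and s_mono: "\<forall>k\<in>{1..<N}. s k \<le> s (k+1)"
    and T: "T \<ge> real (N+1) * d"
    and xs_opt: "is_optimal N (feas_P N d s T) xs"
    and xe_opt: "is_optimal N (feas_Pe N d s T) xe"
  shows
    "((\<forall>i\<in>{2..N+1}. \<not> violates N d xe i) \<longrightarrow> (\<forall>i\<in>{1..N+1}. xs i = xe i)) \<and>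
     ((\<exists>i\<in>{2..N+1}. violates N d xe i) \<longrightarrow>
        (let n0 = (LEAST i. 2 \<le> i \<and> i \<le> N+1 \<and> violates N d xe i) in
          n0 \<le> N \<and>
          ((n0 > 2 \<or> (n0 = 2 \<and> xe 1 = s 1 + d)) \<longrightarrow>
             (\<forall>i\<in>{1..n0-1}. xs i = xe i) \<and>
             (\<forall>i\<in>{n0..N}. xs i = 2 * d) \<and>
             xs (N+1) = T + real N * d - (\<Sum>i=1..N. xs i)) \<and>
          ((n0 = 2 \<and> xe 1 \<noteq> s 1 + d) \<longrightarrow>
             xs 1 = max ((T - (real N - 2) * d) / 2)
                        (Max ((\<lambda>k. s k - (real k - 2) * d) ` {1..N})) \<and>
             (\<forall>i\<in>{2..N}. xs i = 2 * d) \<and>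
             xs (N+1) = T - (real N - 2) * d - xs 1)))"
proof -
  have xsF: "feas_P N d s T xs" using xs_opt unfolding is_optimal_def by auto
  have xeF: "feas_Pe N d s T xe" using xe_opt unfolding is_optimal_def by auto
  have xe_pref: "\<And>k. k \<in> {1..N} \<Longrightarrow> s k + real k * d \<le> (\<Sum>i=1..k. xe i)"
    using xeF unfolding feas_Pe_def by auto
  have xe_tot: "(\<Sum>i=1..N+1. xe i) = T + real N * d" using xeF unfolding feas_Pe_def by auto
  have xs_tot: "(\<Sum>i=1..N+1. xs i) = T + real N * d" using xsF unfolding feas_P_def feas_Pe_def by auto
  have part1: "(\<forall>i\<in>{2..N+1}. \<not> violates N d xe i) \<longrightarrow> (\<forall>i\<in>{1..N+1}. xs i = xe i)"
  proof
    assume nv: "\<forall>i\<in>{2..N+1}. \<not> violates N d xe i"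
    have "\<forall>i\<in>{2..N}. 2*d \<le> xe i" using nv unfolding violates_def by force
    moreover have "d \<le> xe (N+1)" using nv N unfolding violates_def by force
    ultimately have "feas_P N d s T xe" using xeF unfolding feas_P_def by blast
    then have "is_optimal N (feas_P N d s T) xe" using xe_opt unfolding is_optimal_def feas_P_def by blast
    then show "\<forall>i\<in>{1..N+1}. xs i = xe i" using unique[OF xs_opt] by blast
  qed
  have part2: "(\<exists>i\<in>{2..N+1}. violates N d xe i) \<longrightarrow>
        (let n0 = (LEAST i. 2 \<le> i \<and> i \<le> N+1 \<and> violates N d xe i) in
          n0 \<le> N \<and>
          ((n0 > 2 \<or> (n0 = 2 \<and> xe 1 = s 1 + d)) \<longrightarrow>
             (\<forall>i\<in>{1..n0-1}. xs i = xe i) \<and>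
             (\<forall>i\<in>{n0..N}. xs i = 2 * d) \<and>
             xs (N+1) = T + real N * d - (\<Sum>i=1..N. xs i)) \<and>
          ((n0 = 2 \<and> xe 1 \<noteq> s 1 + d) \<longrightarrow>
             xs 1 = max ((T - (real N - 2) * d) / 2)
                        (Max ((\<lambda>k. s k - (real k - 2) * d) ` {1..N})) \<and>
             (\<forall>i\<in>{2..N}. xs i = 2 * d) \<and>
             xs (N+1) = T - (real N - 2) * d - xs 1))"
  proof
    assume ex: "\<exists>i\<in>{2..N+1}. violates N d xe i"
    define n0 where "n0 = (LEAST i. 2 \<le> i \<and> i \<le> N+1 \<and> violates N d xe i)"
    have n0P: "2 \<le> n0 \<and> n0 \<le> N+1 \<and> violates N d xe n0"
      unfolding n0_def by (rule LeastI_ex) (use ex in auto)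
    have before: "2*d \<le> xe i" if "2 \<le> i" "i < n0" "i \<le> N" for i
    proof -
      have "\<not> (2 \<le> i \<and> i \<le> N+1 \<and> violates N d xe i)"
        using not_less_Least[of i "\<lambda>i. 2 \<le> i \<and> i \<le> N+1 \<and> violates N d xe i"] that
        unfolding n0_def by blast
      then show ?thesis using that unfolding violates_def by auto
    qed
    have n0N: "n0 \<le> N"
    proof (rule ccontr)
      assume "\<not> n0 \<le> N"
      then have n0e: "n0 = N+1" using n0P by simp
      then have lt: "xe (N+1) < d" using n0P unfolding violates_def by auto
      have FN: "s N + real N * d + d \<le> T + real N * d" using F1[OF xsF, of N] N by simp
      have NN: "N \<in> {1..N}" using N by simp
      have mono: "xe (N+1) \<le> xe N" using K1[OF xe_opt NN] .
      show False
      proof (cases "xe (N+1) < xe N")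
        case True
        have "(\<Sum>i=1..N. xe i) = s N + real N * d" using K2[OF xe_opt NN True] .
        then show False using xe_tot lt FN unfolding sum_last by simp
      next
        case False
        then have eq: "xe N = xe (N+1)" using mono by simp
        show False
        proof (cases "N \<ge> 2")
          case True
          then have "2*d \<le> xe N" using before[of N] n0e by simp
          then show False using eq lt d by simp
        next
          case False
          then have "N = 1" using N by simp
          then show False using xe_tot eq lt T d by simp
        qed
      qed
    qed
    have after: "xe i < 2*d" if "n0 \<le> i" "i \<le> N+1" for i
    proof -
      have "xe n0 < 2*d" using n0P n0N unfolding violates_def by auto
      moreover have "xe i \<le> xe n0" using mono_trans[OF xe_opt, of n0 i] that n0P by simp
      ultimately show ?thesis by simp
    qed
    have cA: "(n0 > 2 \<or> (n0 = 2 \<and> xe 1 = s 1 + d)) \<longrightarrow>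
             (\<forall>i\<in>{1..n0-1}. xs i = xe i) \<and>
             (\<forall>i\<in>{n0..N}. xs i = 2 * d) \<and>
             xs (N+1) = T + real N * d - (\<Sum>i=1..N. xs i)"
    proof
      assume h: "n0 > 2 \<or> (n0 = 2 \<and> xe 1 = s 1 + d)"
      define m where "m = n0 - 1"
      have m1: "1 \<le> m" and mN: "m < N" and n0m: "n0 = m + 1" using n0P n0N unfolding m_def by auto
      have act: "(\<Sum>i=1..m. xe i) = s m + real m * d"
      proof (cases "n0 > 2")
        case True
        have mm: "m \<in> {1..N}" using m1 mN by simp
        have "2*d \<le> xe m" using before[of m] True mN n0m by simp
        moreover have "xe (m+1) < 2*d" using after[of "m+1"] n0m mN by simp
        ultimately show ?thesis using K2[OF xe_opt mm] by simp
      next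
        case False
        then have "m = 1" "xe 1 = s 1 + d" using h n0m by auto
        then show ?thesis by simp
      qed
      have R: "(\<forall>i\<in>{1..m}. xs i = xe i) \<and> (\<forall>i\<in>{m+1..N}. xs i = 2*d)"
        by (rule caseA[OF d xs_opt xe_opt m1 mN act]) (use before after n0m mN in auto)
      show "(\<forall>i\<in>{1..n0-1}. xs i = xe i) \<and> (\<forall>i\<in>{n0..N}. xs i = 2 * d) \<and>
             xs (N+1) = T + real N * d - (\<Sum>i=1..N. xs i)"
      proof -
        have a: "n0 - 1 = m" using n0m by simp
        have b: "xs (N+1) = T + real N * d - (\<Sum>i=1..N. xs i)" using xs_tot unfolding sum_last by simp
        show ?thesis unfolding a using R b n0m by simp
      qed
    qed
    have cB: "(n0 = 2 \<and> xe 1 \<noteq> s 1 + d) \<longrightarrow>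
             xs 1 = max ((T - (real N - 2) * d) / 2)
                        (Max ((\<lambda>k. s k - (real k - 2) * d) ` {1..N})) \<and>
             (\<forall>i\<in>{2..N}. xs i = 2 * d) \<and>
             xs (N+1) = T - (real N - 2) * d - xs 1"
    proof
      assume h: "n0 = 2 \<and> xe 1 \<noteq> s 1 + d"
      have N1: "(1::nat) \<in> {1..N}" using N by simp
      have "s 1 + d \<le> xe 1" using xe_pref[OF N1] by simp
      then have "xe 2 \<ge> xe 1"
        using K2[OF xe_opt N1] h by (cases "xe 2 < xe 1") (auto simp: numeral_2_eq_2)
      moreover have "xe 2 < 2*d" using after[of 2] h N by simp
      ultimately have x1: "xe 1 < 2*d" by simp
      have le1: "\<And>i. i \<in> {1..N+1} \<Longrightarrow> xe i \<le> xe 1" using mono_trans[OF xe_opt] by auto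
      show "xs 1 = max ((T - (real N - 2) * d) / 2)
                        (Max ((\<lambda>k. s k - (real k - 2) * d) ` {1..N})) \<and>
             (\<forall>i\<in>{2..N}. xs i = 2 * d) \<and>
             xs (N+1) = T - (real N - 2) * d - xs 1"
        by (rule caseB[OF N d T xs_opt xeF x1 le1])
    qed
    show "let n0 = (LEAST i. 2 \<le> i \<and> i \<le> N+1 \<and> violates N d xe i) in
          n0 \<le> N \<and>
          ((n0 > 2 \<or> (n0 = 2 \<and> xe 1 = s 1 + d)) \<longrightarrow>
             (\<forall>i\<in>{1..n0-1}. xs i = xe i) \<and>
             (\<forall>i\<in>{n0..N}. xs i = 2 * d) \<and>
             xs (N+1) = T + real N * d - (\<Sum>i=1..N. xs i)) \<and>
          ((n0 = 2 \<and> xe 1 \<noteq> s 1 + d) \<longrightarrow>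
             xs 1 = max ((T - (real N - 2) * d) / 2)
                        (Max ((\<lambda>k. s k - (real k - 2) * d) ` {1..N})) \<and>
             (\<forall>i\<in>{2..N}. xs i = 2 * d) \<and>
             xs (N+1) = T - (real N - 2) * d - xs 1)"
      unfolding Let_def n0_def[symmetric] using n0N cA cB by blast
  qed
  show ?thesis using part1 part2 by blast
qed

end
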